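(* Let $q$ be an odd prime power, $d$ an odd positive integer, and $A\subset\mathbb F_q^d$. Let $\mathcal{ZR}(A)$ be the number of pairs $(x,y)\in A\times A$ with $\|x-y\|=0$. Let $\Omega^+(A)=\sum_{m:\ \eta(\|m\|)=1}|\widehat A(m)|^2$ and $\Omega^-(A)=\sum_{m:\ \eta(\|m\|)=-1}|\widehat A(m)|^2$ (sums over $m\in\mathbb F_q^d$). \begin{enumerate} \item If $d\equiv 3\pmod 4$ and $q\equiv 3\pmod 4$, then $$\frac{\mathcal{ZR}(A)}{2}=\frac{|A|^2}{2q}-\frac{q^{\frac{3d-1}{2}}}{2}\Omega^+(A)+\frac{q^{\frac{3d-1}{2}}}{2}\Omega^-(A).$$ \item If $d\equiv 1\pmod 4$, or $d\equiv 3\pmod 4$ and $q\equiv 1\pmod 4$, then $$\frac{\mathcal{ZR}(A)}{2}=\frac{|A|^2}{2q}+\frac{q^{\frac{3d-1}{2}}}{2}\Omega^+(A)-\frac{q^{\frac{3d-1}{2}}}{2}\Omega^-(A).$$ \end{enumerate}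
   Context: For $x\in\mathbb F_q^d$, $\|x\|=x_1^2+\cdots+x_d^2$. $\eta$ is the quadratic character of $\mathbb F_q$ with $\eta(0)=0$. $\chi$ is the canonical nontrivial additive character of $\mathbb F_q$, and for $A\subset\mathbb F_q^d$, $\widehat{A}(m)=q^{-d}\sum_{x\in A}\chi(-m\cdot x)$ is the Fourier transform of the indicator function of $A$. *)

theory Defs
  imports "HOL-Analysis.Analysis"
begin

text \<open>Finite fields are modelled by a type of class field and finite; q = CARD('a),
  p = CHAR('a), q = p^n.  Vectors in F_q^d are elements of 'a^'n with d = CARD('n).\<close>

definition ff_degree :: "'a::{field,finite} itself \<Rightarrow> nat" where
  "ff_degree T = (THE n. CHAR('a) ^ n = CARD('a))"

definition abs_trace :: "'a::{field,finite} \<Rightarrow> 'a" where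
  "abs_trace x = (\<Sum>i<ff_degree TYPE('a). x ^ (CHAR('a) ^ i))"

definition canon_chi :: "'a::{field,finite} \<Rightarrow> complex" where
  "canon_chi x = exp (2 * pi * \<i> *
     of_nat (THE k. k < CHAR('a) \<and> of_nat k = abs_trace x) / of_nat CHAR('a))"

definition qchar :: "'a::{field,finite} \<Rightarrow> int" where
  "qchar x = (if x = 0 then 0 else if (\<exists>y. y ^ 2 = x) then 1 else -1)"

definition fq_norm :: "'a::{field,finite} ^ 'n \<Rightarrow> 'a" where
  "fq_norm x = (\<Sum>i\<in>UNIV. (x $ i) ^ 2)"

definition fq_dot :: "'a::{field,finite} ^ 'n \<Rightarrow> 'a ^ 'n \<Rightarrow> 'a" where
  "fq_dot m x = (\<Sum>i\<in>UNIV. m $ i * x $ i)"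

definition fourier_set :: "('a::{field,finite} ^ 'n) set \<Rightarrow> 'a ^ 'n \<Rightarrow> complex" where
  "fourier_set A m = (\<Sum>x\<in>A. canon_chi (- fq_dot m x)) / of_nat CARD('a) ^ CARD('n)"

definition ZR :: "('a::{field,finite} ^ 'n) set \<Rightarrow> nat" where
  "ZR A = card {(x, y). x \<in> A \<and> y \<in> A \<and> fq_norm (x - y) = 0}"

definition Omega_plus :: "('a::{field,finite} ^ 'n) set \<Rightarrow> real" where
  "Omega_plus A = (\<Sum>m\<in>{m. qchar (fq_norm m) = 1}. (cmod (fourier_set A m))\<^sup>2)"

definition Omega_minus :: "('a::{field,finite} ^ 'n) set \<Rightarrow> real" where
  "Omega_minus A = (\<Sum>m\<in>{m. qchar (fq_norm m) = -1}. (cmod (fourier_set A m))\<^sup>2)"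

end

theory Submission
  imports Defs "HOL-Computational_Algebra.Polynomial" "HOL-Computational_Algebra.Primes"
    "HOL-Number_Theory.Residues" "HOL-Algebra.Sylow"
begin


lemma only_prime_factor_power:
  fixes n p :: nat
  assumes "n > 0" "prime p" "\<And>r. prime r \<Longrightarrow> r dvd n \<Longrightarrow> r = p"
  shows "\<exists>k. n = p ^ k"
  using assms
proof (induction n rule: less_induct)
  case (less n)
  show ?case
  proof (cases "n = 1")
    case True then show ?thesis by (intro exI[of _ 0]) simp
  next
    case False
    then have "n \<noteq> 1" by simp
    from prime_factor_nat[OF this] obtain r where r: "prime r" "r dvd n" by blast
    then have "r = p" using less.prems(3) by blast
    then obtain m where m: "n = p * m" using r by blast
    have p1: "p > 1" using prime_gt_1_nat[OF \<open>prime p\<close>] .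
    have "m > 0" using m less.prems(1) by (cases m) simp_all
    have "m < n" using m p1 \<open>m > 0\<close> by simp
    have "\<And>r. prime r \<Longrightarrow> r dvd m \<Longrightarrow> r = p" 
    proof -
      fix r assume "prime r" "r dvd m"
      then have "r dvd n" using m by simp
      then show "r = p" using less.prems(3) \<open>prime r\<close> by blast
    qed
    then obtain k where "m = p ^ k" using less.IH[OF \<open>m < n\<close> \<open>m > 0\<close> less.prems(2)] by blast
    then show ?thesis using m by (intro exI[of _ "Suc k"]) simp
  qed
qed

lemma char_prime_ff: "prime CHAR('a::{field,finite})"
proof -
  have "CHAR('a) > 0" by (simp add: finite_imp_CHAR_pos)
  then show ?thesis using prime_CHAR_semidom by blast
qed

lemma card_ff_power: "\<exists>k. CARD('a::{field,finite}) = CHAR('a) ^ k"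
proof (rule only_prime_factor_power)
  show "CARD('a) > 0" by simp
  show "prime CHAR('a)" by (rule char_prime_ff)
  fix r assume r: "prime r" "r dvd CARD('a)"
  show "r = CHAR('a)"
  proof (rule ccontr)
    assume ne: "r \<noteq> CHAR('a)"
    define G where "G = \<lparr> carrier = (UNIV :: 'a set), monoid.mult = (+), one = (0 :: 'a) \<rparr>"
    interpret group G
    proof (rule groupI)
      fix x assume x: "x \<in> carrier G"
      show "\<exists>y\<in>carrier G. y \<otimes>\<^bsub>G\<^esub> x = \<one>\<^bsub>G\<^esub>"
        by (intro bexI[of _ "-x"]) (auto simp: G_def)
    qed (auto simp: G_def add_ac)
    obtain m where m: "CARD('a) = r * m" using r by auto
    have "\<exists>H. subgroup H G \<and> card H = r ^ 1"
      by (rule sylow_thm) (use r m is_group in \<open>auto simp: G_def order_def\<close>)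
    then obtain H where H: "subgroup H G" "card H = r" by auto
    have "finite H" by simp
    have "0 \<in> H" using subgroup.one_closed[OF H(1)] by (simp add: G_def)
    have "card H \<ge> 2" using H r prime_ge_2_nat by auto
    have "H - {0} \<noteq> {}"
    proof
      assume "H - {0} = {}"
      then have "H \<subseteq> {0}" by auto
      then have "card H \<le> 1" using card_mono[of "{0}" H] by auto
      then show False using \<open>card H \<ge> 2\<close> by auto
    qed
    then obtain x where x: "x \<in> H" "x \<noteq> 0" by auto
    interpret HG: group "G\<lparr>carrier := H\<rparr>" using subgroup.subgroup_is_group[OF H(1) is_group] .
    have "x [^]\<^bsub>G\<lparr>carrier := H\<rparr>\<^esub> order (G\<lparr>carrier := H\<rparr>) = \<one>\<^bsub>G\<lparr>carrier := H\<rparr>\<^esub>"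
      by (rule HG.pow_order_eq_1) (use x \<open>finite H\<close> in auto)
    moreover have "G\<lparr>carrier := H\<rparr> = \<lparr> carrier = H, monoid.mult = (+), one = (0 :: 'a) \<rparr>"
      by (simp add: G_def)
    moreover have "\<And>n. x [^]\<^bsub>\<lparr> carrier = H, monoid.mult = (+), one = (0 :: 'a) \<rparr>\<^esub> (n::nat) = of_nat n * x"
      by (induct_tac n) (auto simp: algebra_simps)
    ultimately have rx: "of_nat r * x = 0" using H by (simp add: order_def)
    have px: "of_nat CHAR('a) * x = 0" by simp
    have cop: "coprime r CHAR('a)" using r ne char_prime_ff primes_coprime by blast
    then have "coprime (int r) (int CHAR('a))" by simp
    then have g1: "gcd (int r) (int CHAR('a)) = 1" by simp
    obtain u v :: int where "u * int r + v * int CHAR('a) = gcd (int r) (int CHAR('a))"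
      using bezout_int by blast
    then have "u * int r + v * int CHAR('a) = 1" using g1 by simp
    then have "of_int (u * int r + v * int CHAR('a)) * x = x" by simp
    then have "of_int u * (of_nat r * x) + of_int v * (of_nat CHAR('a) * x) = x"
      by (simp add: algebra_simps)
    then have "x = 0" using rx px by simp
    then show False using x by simp
  qed
qed


lemma ff_degree_eq: "CHAR('a::{field,finite}) ^ ff_degree TYPE('a) = CARD('a)"
proof -
  obtain k where k: "CARD('a) = CHAR('a) ^ k" using card_ff_power by blast
  have p1: "CHAR('a) > 1" using prime_gt_1_nat[OF char_prime_ff] .
  have "(THE n. CHAR('a) ^ n = CARD('a)) = k"
    by (rule the_equality) (use k p1 in \<open>auto simp: power_inject_exp\<close>)
  then show ?thesis using k by (simp add: ff_degree_def)
qed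

lemma ff_pow_card: "(x::'a::{field,finite}) ^ CARD('a) = x"
proof (cases "x = 0")
  case False
  have "x * (\<Prod>y\<in>UNIV-{0}. x * y) = x * x ^ (CARD('a) - 1) * \<Prod>(UNIV-{0::'a})"
    by (simp add: prod.distrib mult_ac)
  also have "x * x ^ (CARD('a) - 1) = x ^ Suc (CARD('a) - 1)"
    by (subst power_Suc) auto
  also have "Suc (CARD('a) - 1) = CARD('a)"
    using finite_UNIV_card_ge_0[where ?'a = 'a] by simp
  also have "(\<Prod>y\<in>UNIV-{0}. x * y) = (\<Prod>y\<in>UNIV-{0}. y)"
    by (rule prod.reindex_bij_witness[of _ "\<lambda>y. y / x" "\<lambda>y. x * y"]) (use False in auto)
  finally show ?thesis
    by simp
qed (use finite_UNIV_card_ge_0[where ?'a = 'a] in auto)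

lemma trace_add: "abs_trace ((x::'a::{field,finite}) + y) = abs_trace x + abs_trace y"
proof -
  have "\<And>i. (x + y) ^ (CHAR('a) ^ i) = x ^ (CHAR('a) ^ i) + y ^ (CHAR('a) ^ i)"
    by (rule freshmans_dream') (auto simp: char_prime_ff)
  then show ?thesis by (simp add: abs_trace_def sum.distrib)
qed

lemma trace_pow_char: "abs_trace (x::'a::{field,finite}) ^ CHAR('a) = abs_trace x"
proof -
  let ?p = "CHAR('a)" and ?n = "ff_degree TYPE('a)"
  let ?f = "\<lambda>i. x ^ (?p ^ i)"
  have "abs_trace x ^ ?p = (\<Sum>i<?n. ?f i ^ ?p)"
    unfolding abs_trace_def by (rule freshmans_dream_sum) (auto simp: char_prime_ff)
  also have "\<dots> = (\<Sum>i<?n. ?f (Suc i))"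
    by (intro sum.cong refl) (simp only: power_Suc2 power_mult)
  also have "?f 0 + \<dots> = (\<Sum>i<Suc ?n. ?f i)"
    by (rule sum.lessThan_Suc_shift[symmetric])
  also have "\<dots> = (\<Sum>i<?n. ?f i) + ?f ?n" by simp
  also have "?f ?n = x" using ff_degree_eq[where 'a='a] ff_pow_card by simp
  finally have "?f 0 + abs_trace x ^ ?p = abs_trace x + x" by (simp only: abs_trace_def)
  then show ?thesis by simp
qed

lemma of_nat_pow_char: "(of_nat k :: 'a::{field,finite}) ^ CHAR('a) = of_nat k"
proof (induction k)
  case 0 then show ?case using prime_gt_0_nat[OF char_prime_ff[where 'a='a]] by simp
next
  case (Suc k)
  have "(of_nat k + 1 :: 'a) ^ CHAR('a) = of_nat k ^ CHAR('a) + 1 ^ CHAR('a)"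
    by (rule freshmans_dream) (auto simp: char_prime_ff)
  moreover have "of_nat (Suc k) = (of_nat k + 1 :: 'a)" by simp
  ultimately show ?case using Suc by (simp only:) simp
qed

lemma prime_field_roots:
  assumes "(y::'a::{field,finite}) ^ CHAR('a) = y"
  shows "y \<in> of_nat ` {..<CHAR('a)}"
proof -
  let ?p = "CHAR('a)"
  have p2: "?p \<ge> 2" using prime_ge_2_nat[OF char_prime_ff[where 'a='a]] .
  define P :: "'a poly" where "P = Polynomial.monom 1 ?p - Polynomial.monom 1 1"
  have deg: "degree P = ?p" unfolding P_def diff_conv_add_uminus minus_monom using p2
    by (subst degree_add_eq_left) (auto simp: degree_monom_eq)
  then have "P \<noteq> 0" using p2 by auto
  have roots: "poly P z = 0 \<longleftrightarrow> z ^ ?p = z" for z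
    by (simp add: P_def poly_monom)
  have sub: "of_nat ` {..<?p} \<subseteq> {z. poly P z = 0}"
    using of_nat_pow_char roots by auto
  have inj: "inj_on (of_nat :: nat \<Rightarrow> 'a) {..<?p}"
    by (auto simp: inj_on_def of_nat_eq_iff_cong_CHAR cong_def)
  have c1: "card (of_nat ` {..<?p} :: 'a set) = ?p"
    using card_image[OF inj] by simp
  have c2: "card {z. poly P z = 0} \<le> ?p"
    using card_poly_roots_bound[OF \<open>P \<noteq> 0\<close>] deg by simp
  have "of_nat ` {..<?p} = {z. poly P z = 0}"
    using card_subset_eq[OF _ sub] c1 c2 card_mono[OF _ sub] by simp
  then show ?thesis using assms roots by auto
qed

definition trk :: "'a::{field,finite} \<Rightarrow> nat" where
  "trk x = (THE k. k < CHAR('a) \<and> of_nat k = abs_trace x)"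

lemma trk_prop: "trk (x::'a::{field,finite}) < CHAR('a) \<and> of_nat (trk x) = abs_trace x"
proof -
  obtain k where k: "k < CHAR('a)" "of_nat k = abs_trace x"
    using prime_field_roots[OF trace_pow_char[of x]] by auto
  have "(THE k. k < CHAR('a) \<and> of_nat k = abs_trace x) = k"
  proof (rule the_equality)
    fix j assume j: "j < CHAR('a) \<and> of_nat j = abs_trace x"
    then have "[j = k] (mod CHAR('a))" using k by (simp add: of_nat_eq_iff_cong_CHAR[symmetric])
    then show "j = k" using j k by (simp add: cong_def)
  qed (use k in auto)
  then show ?thesis using k by (simp add: trk_def)
qed

lemma canon_chi_trk:
  fixes x :: "'a::{field,finite}"
  shows "canon_chi x = exp (2 * pi * \<i> * of_nat (trk x) / of_nat CHAR('a))"
  by (simp add: canon_chi_def trk_def)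

lemma trace_nonzero: "\<exists>x::'a::{field,finite}. abs_trace x \<noteq> 0"
proof (rule ccontr)
  assume "\<not> ?thesis"
  then have all0: "\<And>x::'a. abs_trace x = 0" by blast
  let ?p = "CHAR('a)" and ?n = "ff_degree TYPE('a)"
  have p2: "?p \<ge> 2" using prime_ge_2_nat[OF char_prime_ff[where 'a='a]] .
  have q: "?p ^ ?n = CARD('a)" by (rule ff_degree_eq)
  have "?n \<noteq> 0"
  proof
    assume "?n = 0" then have "CARD('a) = 1" using q by simp
    moreover have "card {0::'a, 1} \<le> CARD('a)" by (rule card_mono) auto
    then have "CARD('a) \<ge> 2" by simp
    ultimately show False by simp
  qed
  then obtain m where nm: "?n = Suc m" by (cases ?n) auto
  define P :: "'a poly" where "P = (\<Sum>i<?n. Polynomial.monom 1 (?p ^ i))"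
  have polyP: "poly P x = abs_trace x" for x
    by (simp add: P_def poly_sum poly_monom abs_trace_def)
  have inj: "inj (\<lambda>i. ?p ^ i)" using p2 by (auto simp: inj_on_def power_inject_exp)
  have "Polynomial.coeff P (?p ^ m) = (\<Sum>i<?n. if ?p ^ i = ?p ^ m then 1 else 0)"
    by (simp add: P_def coeff_sum)
  also have "\<dots> = (\<Sum>i<?n. if i = m then 1 else 0)"
    using p2 by (intro sum.cong refl) (simp add: power_inject_exp)
  also have "\<dots> = 1" using nm by simp
  finally have "P \<noteq> 0" by auto
  have "degree P \<le> ?p ^ m"
    unfolding P_def
  proof (rule degree_sum_le)
    fix i assume "i \<in> {..<?n}"
    then have "i \<le> m" using nm by simp
    then have "?p ^ i \<le> ?p ^ m" using p2 by (simp add: power_increasing)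
    then show "degree (Polynomial.monom (1::'a) (?p ^ i)) \<le> ?p ^ m"
      using degree_monom_le order_trans by blast
  qed simp
  then have "card {x. poly P x = 0} \<le> ?p ^ m"
    using card_poly_roots_bound[OF \<open>P \<noteq> 0\<close>] by simp
  moreover have "{x. poly P x = 0} = UNIV" using polyP all0 by simp
  moreover have "?p ^ m < ?p ^ ?n" using p2 nm by simp
  ultimately show False using q by simp
qed


lemma canon_chi_add:
  fixes x y :: "'a::{field,finite}"
  shows "canon_chi (x + y) = canon_chi x * canon_chi y"
proof -
  let ?p = "CHAR('a)"
  define a where "a = trk x"
  define b where "b = trk y"
  define c where "c = trk (x + y)"
  have p0: "?p > 0" using prime_gt_0_nat[OF char_prime_ff[where 'a='a]] .
  have "(of_nat c :: 'a) = of_nat (a + b)"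
    using trk_prop[of x] trk_prop[of y] trk_prop[of "x+y"] trace_add[of x y]
    by (simp add: a_def b_def c_def)
  then have "[c = a + b] (mod ?p)" by (rule of_nat_eq_iff_cong_CHAR[THEN iffD1])
  moreover have "c < ?p" using trk_prop[of "x+y"] by (simp add: c_def)
  ultimately have c: "c = (a + b) mod ?p" by (simp add: cong_def)
  define j where "j = (a + b) div ?p"
  have ab: "a + b = c + ?p * j" using c by (simp add: j_def)
  have "2 * pi * \<i> * of_nat a / of_nat ?p + 2 * pi * \<i> * of_nat b / of_nat ?p
        = 2 * pi * \<i> * of_nat c / of_nat ?p + \<i> * (of_int (int j) * (of_real pi * 2))"
  proof -
    have "(of_nat a + of_nat b :: complex) = of_nat c + of_nat ?p * of_nat j"
      using arg_cong[OF ab, of "of_nat :: nat \<Rightarrow> complex"] by simp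
    note e = this
    have "2 * pi * \<i> * of_nat a / of_nat ?p + 2 * pi * \<i> * of_nat b / of_nat ?p
        = 2 * pi * \<i> * (of_nat a + of_nat b) / of_nat ?p" by (simp add: add_divide_distrib algebra_simps)
    also have "\<dots> = 2 * pi * \<i> * (of_nat c + of_nat ?p * of_nat j) / of_nat ?p" using e by simp
    also have "\<dots> = 2 * pi * \<i> * of_nat c / of_nat ?p + 2 * pi * \<i> * of_nat j"
      using p0 by (simp add: field_simps)
    also have "\<dots> = 2 * pi * \<i> * of_nat c / of_nat ?p + \<i> * (of_int (int j) * (of_real pi * 2))"
      by simp
    finally show ?thesis .
  qed
  note eq = this
  have "exp (2 * pi * \<i> * of_nat a / of_nat ?p) * exp (2 * pi * \<i> * of_nat b / of_nat ?p)
        = exp (2 * pi * \<i> * of_nat a / of_nat ?p + 2 * pi * \<i> * of_nat b / of_nat ?p)"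
    by (simp only: exp_add)
  also have "\<dots> = exp (2 * pi * \<i> * of_nat c / of_nat ?p + \<i> * (of_int (int j) * (of_real pi * 2)))"
    by (simp only: eq)
  also have "\<dots> = exp (2 * pi * \<i> * of_nat c / of_nat ?p)"
    by (rule exp_plus_2pin)
  finally have "exp (2 * pi * \<i> * of_nat a / of_nat ?p) * exp (2 * pi * \<i> * of_nat b / of_nat ?p)
        = exp (2 * pi * \<i> * of_nat c / of_nat ?p)" .
  then show ?thesis by (simp add: canon_chi_trk a_def b_def c_def)
qed

lemma canon_chi_norm: "cmod (canon_chi (x::'a::{field,finite})) = 1"
  by (simp add: canon_chi_trk)

lemma canon_chi_nontriv: "\<exists>x::'a::{field,finite}. canon_chi x \<noteq> 1"
proof -
  let ?p = "CHAR('a)"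
  obtain x :: 'a where x: "abs_trace x \<noteq> 0" using trace_nonzero by blast
  define k where "k = trk x"
  have k1: "k < ?p" using trk_prop[of x] by (simp add: k_def)
  have k2: "k \<noteq> 0"
  proof
    assume "k = 0"
    then have "abs_trace x = of_nat 0" using trk_prop[of x] by (simp add: k_def)
    then show False using x by simp
  qed
  have p0: "?p > 0" using prime_gt_0_nat[OF char_prime_ff[where 'a='a]] .
  show ?thesis
  proof (intro exI[of _ x] notI)
    assume "canon_chi x = 1"
    then have "exp (2 * pi * \<i> * of_nat k / of_nat ?p) = 1" by (simp add: canon_chi_trk k_def)
    then obtain n :: int where n: "Im (2 * pi * \<i> * of_nat k / of_nat ?p) = of_int (2 * n) * pi"
      by (auto simp: exp_eq_1)
    then have "2 * pi * real k / real ?p = 2 * real_of_int n * pi" by simp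
    then have "real k = real_of_int n * real ?p" using p0 by (simp add: field_simps)
    then have "int k = n * int ?p" by (metis of_int_eq_iff of_int_mult of_int_of_nat_eq)
    moreover have "0 < int k" "int k < int ?p" using k1 k2 by auto
    ultimately show False
    proof (cases "n \<ge> 1")
      case True
      then have "n * int ?p \<ge> 1 * int ?p" by (intro mult_right_mono) auto
      then show False using \<open>int k = n * int ?p\<close> \<open>int k < int ?p\<close> by linarith
    next
      case False
      then have "n \<le> 0" by simp
      then have "n * int ?p \<le> 0" by (simp add: mult_nonpos_nonneg)
      then show False using \<open>int k = n * int ?p\<close> \<open>0 < int k\<close> by simp
    qed
  qed
qed



lemma two_nz:
  assumes "odd CARD('a::{field,finite})"
  shows "(2::'a) \<noteq> 0"
proof
  assume "(2::'a) = 0"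
  then have "(of_nat 2 :: 'a) = 0" by simp
  then have "CHAR('a) dvd 2" by (simp only: of_nat_eq_0_iff_char_dvd)
  then have "CHAR('a) = 2" using char_prime_ff[where 'a='a]
    using dvd_imp_le[of "CHAR('a)" 2] prime_ge_2_nat[OF char_prime_ff[where 'a='a]] by simp
  then have "2 dvd CARD('a)" using CHAR_dvd_CARD[where 'a='a] by simp
  then show False using assms by simp
qed

lemma sq_roots:
  assumes two: "(2::'a::{field,finite}) \<noteq> 0"
  shows "int (card {z::'a. z^2 = t}) = 1 + qchar t"
proof (cases "t = 0")
  case True
  then have "{z::'a. z^2 = t} = {0}" by auto
  then show ?thesis using True by (simp add: qchar_def)
next
  case False
  show ?thesis
  proof (cases "\<exists>y. y ^ 2 = t")
    case True
    then obtain y where y: "y ^ 2 = t" by blast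
    then have "y \<noteq> 0" using False by auto
    have "y \<noteq> -y"
    proof
      assume "y = -y"
      then have "2 * y = 0" by (simp add: algebra_simps)
      then show False using two \<open>y \<noteq> 0\<close> by simp
    qed
    have iff: "z^2 = t \<longleftrightarrow> z = y \<or> z = -y" for z
    proof
      assume "z^2 = t"
      then have "z^2 - y^2 = 0" using y by simp
      then have "(z - y) * (z + y) = 0" by (simp add: algebra_simps power2_eq_square)
      then show "z = y \<or> z = -y" by (auto simp: add_eq_0_iff)
    next
      assume "z = y \<or> z = -y"
      then show "z^2 = t" using y by auto
    qed
    have "{z::'a. z^2 = t} = {y, -y}" using iff by auto
    then show ?thesis using \<open>y \<noteq> -y\<close> False True by (simp add: qchar_def)
  next
    case nosq: False
    then have "{z::'a. z^2 = t} = {}" by auto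
    then show ?thesis using False nosq by (simp add: qchar_def)
  qed
qed

lemma qchar_sum:
  assumes two: "(2::'a::{field,finite}) \<noteq> 0"
  shows "(\<Sum>t::'a\<in>UNIV. qchar t) = 0"
proof -
  have "card (\<Union>t\<in>UNIV. {z::'a. z^2 = t}) = (\<Sum>t\<in>UNIV. card {z::'a. z^2 = t})"
    by (rule card_UN_disjoint) auto
  moreover have "(\<Union>t\<in>UNIV. {z::'a. z^2 = t}) = UNIV" by auto
  ultimately have "int CARD('a) = (\<Sum>t\<in>UNIV. int (card {z::'a. z^2 = t}))" by simp
  also have "\<dots> = (\<Sum>t::'a\<in>UNIV. 1 + qchar t)" using sq_roots[OF two] by simp
  also have "\<dots> = int CARD('a) + (\<Sum>t::'a\<in>UNIV. qchar t)" by (simp add: sum.distrib)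
  finally show ?thesis by simp
qed

definition sqset :: "'a::{field,finite} set" where
  "sqset = {x. x \<noteq> 0 \<and> (\<exists>y. y^2 = x)}"
definition nsqset :: "'a::{field,finite} set" where
  "nsqset = {x. x \<noteq> 0 \<and> \<not> (\<exists>y. y^2 = x)}"

lemma card_sq_nsq:
  assumes two: "(2::'a::{field,finite}) \<noteq> 0"
  shows "card (sqset :: 'a set) = card (nsqset :: 'a set)"
    and "card (sqset :: 'a set) + card (nsqset :: 'a set) = CARD('a) - 1"
proof -
  have part: "UNIV = insert 0 (sqset \<union> nsqset :: 'a set)" by (auto simp: sqset_def nsqset_def)
  have "(\<Sum>t::'a\<in>UNIV. qchar t) = (\<Sum>t\<in>insert 0 (sqset \<union> nsqset :: 'a set). qchar t)"
    by (simp only: part[symmetric])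
  also have "\<dots> = (\<Sum>t\<in>(sqset \<union> nsqset :: 'a set). qchar t)"
  proof -
    have z: "(0::'a) \<notin> sqset \<union> nsqset" by (simp add: sqset_def nsqset_def)
    have q0: "qchar (0::'a) = 0" by (simp add: qchar_def)
    show ?thesis using z q0 by (simp add: sum.insert)
  qed
  also have "\<dots> = (\<Sum>t\<in>(sqset::'a set). qchar t) + (\<Sum>t\<in>(nsqset::'a set). qchar t)"
    by (rule sum.union_disjoint) (auto simp: sqset_def nsqset_def)
  also have "(\<Sum>t\<in>(sqset::'a set). qchar t) = (\<Sum>t\<in>(sqset::'a set). 1)"
    by (intro sum.cong refl) (auto simp: sqset_def qchar_def)
  also have "(\<Sum>t\<in>(nsqset::'a set). qchar t) = (\<Sum>t\<in>(nsqset::'a set). -1)"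
    by (intro sum.cong refl) (auto simp: nsqset_def qchar_def)
  finally have "int (card (sqset::'a set)) - int (card (nsqset::'a set)) = 0"
    using qchar_sum[OF two] by simp
  then show "card (sqset :: 'a set) = card (nsqset :: 'a set)" by simp
  have "CARD('a) = card (insert 0 (sqset \<union> nsqset :: 'a set))" using part by simp
  also have "\<dots> = card (sqset \<union> nsqset :: 'a set) + 1"
    by (subst card_insert_disjoint) (auto simp: sqset_def nsqset_def)
  also have "card (sqset \<union> nsqset :: 'a set) = card (sqset :: 'a set) + card (nsqset :: 'a set)"
    by (rule card_Un_disjoint) (auto simp: sqset_def nsqset_def)
  finally show "card (sqset :: 'a set) + card (nsqset :: 'a set) = CARD('a) - 1" by simp
qed

lemma nsq_mult_nsq:
  assumes two: "(2::'a::{field,finite}) \<noteq> 0"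
    and a: "a \<in> (nsqset::'a set)" and b: "b \<in> nsqset"
  shows "a * b \<in> sqset"
proof -
  have sub: "(\<lambda>x. a * x) ` sqset \<subseteq> nsqset"
  proof
    fix w assume "w \<in> (\<lambda>x. a * x) ` sqset"
    then obtain x z where x: "w = a * x" "x \<noteq> 0" "z^2 = x" by (auto simp: sqset_def)
    have "w \<noteq> 0" using x a by (auto simp: nsqset_def)
    moreover have "\<not> (\<exists>y. y^2 = w)"
    proof
      assume "\<exists>y. y^2 = w"
      then obtain y where "y^2 = w" by blast
      then have "(y / z)^2 = a" using x by (auto simp: power_divide)
      then show False using a by (auto simp: nsqset_def)
    qed
    ultimately show "w \<in> nsqset" by (simp add: nsqset_def)
  qed
  have inj: "inj_on (\<lambda>x. a * x) sqset" using a by (auto simp: inj_on_def nsqset_def)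
  have "card ((\<lambda>x. a * x) ` sqset) = card (nsqset::'a set)"
    using card_image[OF inj] card_sq_nsq(1)[OF two] by simp
  then have "(\<lambda>x. a * x) ` sqset = nsqset" using sub by (intro card_subset_eq) auto
  then obtain x where x: "x \<in> sqset" "b = a * x" using b by auto
  then obtain z where z: "z^2 = x" "x \<noteq> 0" by (auto simp: sqset_def)
  have "a * b = (a * z)^2" using x z by (simp add: power2_eq_square algebra_simps)
  moreover have "a * b \<noteq> 0" using a b by (auto simp: nsqset_def)
  ultimately show ?thesis by (auto simp: sqset_def)
qed

lemma qchar_sq: "x \<in> sqset \<Longrightarrow> qchar x = 1" "x \<in> nsqset \<Longrightarrow> qchar x = -1"
  by (auto simp: qchar_def sqset_def nsqset_def)

lemma sq_or_nsq: "(x::'a::{field,finite}) \<noteq> 0 \<Longrightarrow> x \<in> sqset \<or> x \<in> nsqset"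
  by (auto simp: sqset_def nsqset_def)

lemma qchar_mult:
  assumes two: "(2::'a::{field,finite}) \<noteq> 0"
  shows "qchar (a * b) = qchar a * qchar (b::'a)"
proof (cases "a = 0 \<or> b = 0")
  case True then show ?thesis by (auto simp: qchar_def)
next
  case False
  then have a0: "a \<noteq> 0" and b0: "b \<noteq> 0" by auto
  have sqsq: "x * y \<in> sqset" if "x \<in> sqset" "y \<in> sqset" for x y :: 'a
  proof -
    from that(1) have "x \<noteq> 0 \<and> (\<exists>u. u^2 = x)" by (simp add: sqset_def)
    then obtain u where u: "u^2 = x" "x \<noteq> 0" by blast
    from that(2) have "y \<noteq> 0 \<and> (\<exists>u. u^2 = y)" by (simp add: sqset_def)
    then obtain v where v: "v^2 = y" "y \<noteq> 0" by blast
    have "x * y = (u * v)^2" using u v by (simp add: power_mult_distrib)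
    then show ?thesis using u v by (auto simp: sqset_def)
  qed
  have sqnsq: "x * y \<in> nsqset" if "x \<in> sqset" "y \<in> nsqset" for x y :: 'a
  proof -
    from that(1) have "x \<noteq> 0 \<and> (\<exists>u. u^2 = x)" by (simp add: sqset_def)
    then obtain u where u: "u^2 = x" "x \<noteq> 0" by blast
    have "y \<noteq> 0" using that by (auto simp: nsqset_def)
    have "\<not> (\<exists>w. w^2 = x * y)"
    proof
      assume "\<exists>w. w^2 = x * y"
      then obtain w where "w^2 = x * y" by blast
      then have "(w / u)^2 = y" using u by (auto simp: power_divide)
      then show False using that by (auto simp: nsqset_def)
    qed
    then show ?thesis using u \<open>y \<noteq> 0\<close> by (auto simp: nsqset_def)
  qed
  consider "a \<in> sqset" "b \<in> sqset" | "a \<in> sqset" "b \<in> nsqset" | "a \<in> nsqset" "b \<in> sqset"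
    | "a \<in> nsqset" "b \<in> nsqset" using sq_or_nsq[OF a0] sq_or_nsq[OF b0] by blast
  then show ?thesis
  proof cases
    case 1 then show ?thesis using sqsq[OF 1] by (simp add: qchar_sq)
  next
    case 2 then show ?thesis using sqnsq[OF 2] by (simp add: qchar_sq)
  next
    case 3 then show ?thesis using sqnsq[OF 3(2,1)] by (simp add: qchar_sq mult.commute)
  next
    case 4 then show ?thesis using nsq_mult_nsq[OF two 4] by (simp add: qchar_sq)
  qed
qed

lemma qchar_sq_one: "(x::'a::{field,finite}) \<noteq> 0 \<Longrightarrow> qchar x * qchar x = 1"
  by (auto simp: qchar_def)

lemma qchar_range: "qchar x = 0 \<or> qchar x = 1 \<or> qchar x = -1"
  by (auto simp: qchar_def)

lemma qchar_inverse: "qchar (inverse (x::'a::{field,finite})) = qchar x"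
proof -
  have "(\<exists>y. y^2 = inverse x) \<longleftrightarrow> (\<exists>y. y^2 = x)"
  proof
    assume "\<exists>y. y^2 = inverse x"
    then obtain y where "y^2 = inverse x" by blast
    then have "(inverse y)^2 = x" by (simp add: power_inverse)
    then show "\<exists>y. y^2 = x" by blast
  next
    assume "\<exists>y. y^2 = x"
    then obtain y where "y^2 = x" by blast
    then have "(inverse y)^2 = inverse x" by (simp add: power_inverse)
    then show "\<exists>y. y^2 = inverse x" by blast
  qed
  then show ?thesis by (simp add: qchar_def)
qed

lemma qchar_square: "(y::'a::{field,finite}) \<noteq> 0 \<Longrightarrow> qchar (y^2) = 1"
  by (auto simp: qchar_def)



lemma invol_even:
  assumes "finite T" "\<And>x. x \<in> T \<Longrightarrow> f x \<in> T \<and> f x \<noteq> x \<and> f (f x) = x"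
  shows "even (card T)"
  using assms
proof (induction "card T" arbitrary: T rule: less_induct)
  case less
  show ?case
  proof (cases "T = {}")
    case True then show ?thesis by simp
  next
    case False
    then obtain x where x: "x \<in> T" by blast
    have fx: "f x \<in> T" "f x \<noteq> x" "f (f x) = x" using less.prems(2)[OF x] by auto
    define T' where "T' = T - {x, f x}"
    have fin: "finite T'" using less.prems(1) by (simp add: T'_def)
    have cT: "card T = card T' + 2"
    proof -
      have "card T' = card T - card {x, f x}"
        unfolding T'_def by (rule card_Diff_subset) (use x fx in auto)
      moreover have "card {x, f x} = 2" using fx by simp
      moreover have "card {x, f x} \<le> card T" using x fx less.prems(1) by (intro card_mono) auto
      ultimately show ?thesis by simp
    qed
    have "even (card T')"
    proof (rule less.hyps)
      show "card T' < card T" using cT by simp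
      show "finite T'" by (rule fin)
      fix y assume y: "y \<in> T'"
      then have yT: "y \<in> T" "y \<noteq> x" "y \<noteq> f x" by (auto simp: T'_def)
      have P: "f y \<in> T" "f y \<noteq> y" "f (f y) = y" using less.prems(2)[OF yT(1)] by auto
      have "f y \<noteq> x"
      proof
        assume "f y = x" then have "f (f y) = f x" by simp
        then show False using P yT by simp
      qed
      moreover have "f y \<noteq> f x"
      proof
        assume "f y = f x" then have "f (f y) = f (f x)" by simp
        then show False using P yT fx by simp
      qed
      ultimately show "f y \<in> T' \<and> f y \<noteq> y \<and> f (f y) = y" using P by (auto simp: T'_def)
    qed
    then show ?thesis using cT by simp
  qed
qed

lemma qchar_minus_one:
  assumes oddq: "odd CARD('a::{field,finite})"
  shows "qchar (-1::'a) = (if CARD('a) mod 4 = 1 then 1 else -1)"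
proof -
  have two: "(2::'a) \<noteq> 0" by (rule two_nz[OF oddq])
  have m1: "(1::'a) \<noteq> -1"
  proof
    assume "(1::'a) = -1"
    then have "(2::'a) = 0" by (simp add: eq_neg_iff_add_eq_0 one_add_one)
    then show False using two by simp
  qed
  let ?S = "sqset :: 'a set"
  define F where "F = {x \<in> ?S. inverse x = x}"
  define T where "T = ?S - F"
  have "2 * card ?S = CARD('a) - 1" using card_sq_nsq[OF two] by simp
  have "(1::'a) \<noteq> 0 \<and> (\<exists>y. y^2 = (1::'a))" by (metis one_neq_zero power_one)
  then have one_S: "(1::'a) \<in> ?S" by (simp add: sqset_def)
  have F_eq: "F = {1} \<union> (if (-1::'a) \<in> ?S then {-1} else {})"
  proof -
    have "x \<in> F \<longleftrightarrow> x \<in> ?S \<and> (x = 1 \<or> x = -1)" for x :: 'a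
    proof -
      have "x \<in> ?S \<Longrightarrow> inverse x = x \<longleftrightarrow> (x = 1 \<or> x = -1)"
      proof -
        assume xS: "x \<in> ?S"
        then have x0: "x \<noteq> 0" by (simp add: sqset_def)
        have "inverse x = x \<longleftrightarrow> x * x = 1"
        proof
          assume "inverse x = x" then show "x * x = 1" using x0 by (metis right_inverse)
        next
          assume "x * x = 1" then show "inverse x = x" by (rule inverse_unique)
        qed
        also have "\<dots> \<longleftrightarrow> (x - 1) * (x + 1) = 0" by (simp add: algebra_simps)
        also have "\<dots> \<longleftrightarrow> (x - 1 = 0 \<or> x + 1 = 0)" by simp
        also have "\<dots> \<longleftrightarrow> (x = 1 \<or> x = -1)" by (simp only: eq_neg_iff_add_eq_0 right_minus_eq)
        finally show ?thesis .
      qed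
      then show ?thesis by (auto simp: F_def)
    qed
    then have Fx: "x \<in> F \<longleftrightarrow> x \<in> ?S \<and> (x = 1 \<or> x = -1)" for x by blast
    show ?thesis
    proof (cases "(-1::'a) \<in> ?S")
      case True
      then show ?thesis using one_S Fx by auto
    next
      case False
      then show ?thesis using one_S Fx by auto
    qed
  qed
  have evenT: "even (card T)"
  proof (rule invol_even[of T inverse])
    show "finite T" by simp
    fix x assume x: "x \<in> T"
    then have xS: "x \<in> ?S" and xF: "inverse x \<noteq> x" by (auto simp: T_def F_def)
    then obtain y where y: "y^2 = x" "x \<noteq> 0" by (auto simp: sqset_def)
    have "(inverse y)^2 = inverse x" using y by (simp add: power_inverse)
    then have "inverse x \<in> ?S" using y by (auto simp: sqset_def)
    moreover have "inverse (inverse x) \<noteq> inverse x" using xF by simp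
    ultimately show "inverse x \<in> T \<and> inverse x \<noteq> x \<and> inverse (inverse x) = x"
      using xF by (auto simp: T_def F_def)
  qed
  have cS: "card ?S = card F + card T"
  proof -
    have "?S = F \<union> T" "F \<inter> T = {}" by (auto simp: F_def T_def)
    moreover have "card (F \<union> T) = card F + card T" using \<open>F \<inter> T = {}\<close> by (intro card_Un_disjoint) auto
    ultimately show ?thesis by simp
  qed
  have S2: "2 * card ?S = CARD('a) - 1" using card_sq_nsq[OF two] by simp
  have q1: "CARD('a) \<ge> 1" by (simp add: Suc_leI)
  show ?thesis
  proof (cases "(-1::'a) \<in> ?S")
    case True
    then have "card F = 2" using F_eq m1 by simp
    then have "even (card ?S)" using cS evenT by simp
    then obtain k where k: "card ?S = 2 * k" by blast
    then have "CARD('a) = 4 * k + 1" using S2 q1 by linarith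
    then have "CARD('a) mod 4 = 1" by simp
    moreover have "qchar (-1::'a) = 1" using True by (simp add: qchar_sq)
    ultimately show ?thesis by simp
  next
    case False
    then have "card F = 1" using F_eq by simp
    then have "odd (card ?S)" using cS evenT by simp
    then obtain k where k: "card ?S = 2 * k + 1" using oddE by blast
    then have "CARD('a) = 4 * k + 3" using S2 q1 by linarith
    then have "CARD('a) mod 4 \<noteq> 1" by simp
    moreover have "qchar (-1::'a) = -1" using False by (auto simp: qchar_def sqset_def)
    ultimately show ?thesis by simp
  qed
qed



definition et :: "'a::{field,finite} \<Rightarrow> complex" where
  "et t = of_int (qchar t)"

lemma et_mult: "(2::'a::{field,finite}) \<noteq> 0 \<Longrightarrow> et (a * b) = et a * et (b::'a)"
  by (simp add: et_def qchar_mult)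

lemma et_sq_one: "(x::'a::{field,finite}) \<noteq> 0 \<Longrightarrow> et x * et x = 1"
proof -
  assume "x \<noteq> 0"
  then have "qchar x * qchar x = 1" by (rule qchar_sq_one)
  then have "of_int (qchar x * qchar x) = (1::complex)" by simp
  then show ?thesis by (simp add: et_def)
qed

lemma et_zero [simp]: "et 0 = 0" by (simp add: et_def qchar_def)

lemma et_inverse: "et (inverse (x::'a::{field,finite})) = et x"
  by (simp add: et_def qchar_inverse)

lemma et_sum: "(2::'a::{field,finite}) \<noteq> 0 \<Longrightarrow> (\<Sum>t::'a\<in>UNIV. et t) = 0"
proof -
  assume two: "(2::'a) \<noteq> 0"
  have "(\<Sum>t::'a\<in>UNIV. et t) = of_int (\<Sum>t::'a\<in>UNIV. qchar t)" by (simp add: et_def)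
  then show ?thesis using qchar_sum[OF two] by simp
qed

lemma et_square: "(y::'a::{field,finite}) \<noteq> 0 \<Longrightarrow> et (y^2) = 1"
  by (simp add: et_def qchar_square)

lemma sum_vec_prod:
  fixes f :: "'n::finite \<Rightarrow> 'a::finite \<Rightarrow> 'c::comm_semiring_1"
  shows "(\<Sum>w::'a^'n\<in>UNIV. \<Prod>i\<in>UNIV. f i (w $ i)) = (\<Prod>i\<in>UNIV. \<Sum>t\<in>UNIV. f i t)"
proof -
  have "(\<Prod>i\<in>UNIV. \<Sum>t\<in>UNIV. f i t) = (\<Sum>g\<in>PiE UNIV (\<lambda>_. UNIV). \<Prod>i\<in>UNIV. f i (g i))"
    by (rule prod_sum_PiE) auto
  also have "PiE UNIV (\<lambda>_. UNIV) = (UNIV :: ('n \<Rightarrow> 'a) set)" by auto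
  also have "(\<Sum>g\<in>(UNIV :: ('n \<Rightarrow> 'a) set). \<Prod>i\<in>UNIV. f i (g i))
      = (\<Sum>w::'a^'n\<in>UNIV. \<Prod>i\<in>UNIV. f i (w $ i))"
    by (rule sum.reindex_bij_witness[of _ vec_nth vec_lambda]) auto
  finally show ?thesis by simp
qed

locale addchar =
  fixes ch :: "'a::{field,finite} \<Rightarrow> complex"
  assumes ch_add: "ch (x + y) = ch x * ch y"
    and ch_nontriv: "\<exists>x. ch x \<noteq> 1"
    and ch_norm: "cmod (ch x) = 1"
    and two: "(2::'a) \<noteq> 0"
begin

lemma ch_zero [simp]: "ch 0 = 1"
proof -
  have "ch 0 = ch 0 * ch 0" using ch_add[of 0 0] by simp
  moreover have "ch 0 \<noteq> 0" using ch_norm[of 0] by auto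
  ultimately show ?thesis by (metis mult_cancel_left2)
qed

lemma ch_minus: "ch (- x) = cnj (ch x)"
proof -
  have "ch x * ch (- x) = 1" using ch_add[of x "-x"] by simp
  moreover have "ch x * cnj (ch x) = 1"
    using complex_norm_square[of "ch x"] ch_norm[of x] by simp
  moreover have "ch x \<noteq> 0" using ch_norm[of x] by auto
  ultimately show ?thesis by (metis mult_left_cancel)
qed

lemma ch_diff: "ch (x - y) = ch x * cnj (ch y)"
  using ch_add[of x "-y"] by (simp add: ch_minus)

lemma ch_sum: "ch (sum f S) = (\<Prod>i\<in>S. ch (f i))"
  by (induction S rule: infinite_finite_induct) (auto simp: ch_add)

lemma ch_sum_all: "(\<Sum>u::'a\<in>UNIV. ch u) = 0"
proof -
  obtain x0 where x0: "ch x0 \<noteq> 1" using ch_nontriv by blast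
  have "(\<Sum>u::'a\<in>UNIV. ch u) = (\<Sum>u::'a\<in>UNIV. ch (u + x0))"
    by (rule sum.reindex_bij_witness[of _ "\<lambda>u. u + x0" "\<lambda>u. u - x0"]) auto
  also have "\<dots> = ch x0 * (\<Sum>u::'a\<in>UNIV. ch u)"
    by (simp add: ch_add sum_distrib_left mult.commute)
  finally have "(1 - ch x0) * (\<Sum>u::'a\<in>UNIV. ch u) = 0" by (simp add: algebra_simps)
  then show ?thesis using x0 by simp
qed

lemma orth1: "(\<Sum>t::'a\<in>UNIV. ch (a * t)) = (if a = 0 then of_nat CARD('a) else 0)"
proof (cases "a = 0")
  case False
  have "(\<Sum>t::'a\<in>UNIV. ch (a * t)) = (\<Sum>u::'a\<in>UNIV. ch u)"
    by (rule sum.reindex_bij_witness[of _ "\<lambda>u. u / a" "\<lambda>t. a * t"]) (use False in auto)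
  then show ?thesis using False ch_sum_all by simp
qed simp

lemma orthd:
  fixes v :: "'a^'n::finite"
  shows "(\<Sum>m::'a^'n\<in>UNIV. ch (fq_dot m v)) = (if v = 0 then of_nat CARD('a) ^ CARD('n) else 0)"
proof (cases "v = 0")
  case True
  have "(\<Sum>m::'a^'n\<in>UNIV. ch (fq_dot m v)) = (\<Sum>m::'a^'n\<in>UNIV. 1)"
    by (intro sum.cong refl) (simp add: True fq_dot_def)
  then show ?thesis using True by simp
next
  case False
  then obtain i where i: "v $ i \<noteq> 0" by (metis vec_eq_iff zero_index)
  obtain x0 where x0: "ch x0 \<noteq> 1" using ch_nontriv by blast
  define m0 :: "'a^'n" where "m0 = (\<chi> j. if j = i then x0 / v $ i else 0)"
  have d0: "fq_dot m0 v = x0"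
  proof -
    have "fq_dot m0 v = (\<Sum>j\<in>UNIV. if j = i then x0 else 0)"
      unfolding fq_dot_def m0_def by (intro sum.cong refl) (use i in auto)
    then show ?thesis by simp
  qed
  have dadd: "fq_dot (m + m0) v = fq_dot m v + fq_dot m0 v" for m
    by (simp add: fq_dot_def sum.distrib distrib_right)
  have "(\<Sum>m::'a^'n\<in>UNIV. ch (fq_dot m v)) = (\<Sum>m::'a^'n\<in>UNIV. ch (fq_dot (m + m0) v))"
    by (rule sum.reindex_bij_witness[of _ "\<lambda>u. u + m0" "\<lambda>u. u - m0"]) auto
  also have "\<dots> = ch x0 * (\<Sum>m::'a^'n\<in>UNIV. ch (fq_dot m v))"
    by (simp add: dadd d0 ch_add sum_distrib_left mult.commute)
  finally have "(1 - ch x0) * (\<Sum>m::'a^'n\<in>UNIV. ch (fq_dot m v)) = 0" by (simp add: algebra_simps)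
  then show ?thesis using x0 False by simp
qed

definition G :: complex where "G = (\<Sum>t::'a\<in>UNIV. et t * ch t)"

lemma gauss_quad:
  assumes s: "s \<noteq> 0"
  shows "(\<Sum>z::'a\<in>UNIV. ch (s * z^2)) = et s * G"
proof -
  have "(\<Sum>z::'a\<in>UNIV. ch (s * z^2)) = (\<Sum>t\<in>UNIV. \<Sum>z\<in>{z. z \<in> UNIV \<and> z^2 = t}. ch (s * z^2))"
    by (rule sum.group[symmetric]) auto
  also have "\<dots> = (\<Sum>t::'a\<in>UNIV. of_nat (card {z::'a. z^2 = t}) * ch (s * t))"
    by (intro sum.cong refl) simp
  also have "\<dots> = (\<Sum>t::'a\<in>UNIV. (1 + et t) * ch (s * t))"
  proof (intro sum.cong refl)
    fix t :: 'a
    have "of_int (int (card {z::'a. z^2 = t})) = (of_int (1 + qchar t) :: complex)"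
      using sq_roots[OF two, of t] by simp
    then show "of_nat (card {z::'a. z^2 = t}) * ch (s * t) = (1 + et t) * ch (s * t)"
      by (simp add: et_def)
  qed
  also have "\<dots> = (\<Sum>t::'a\<in>UNIV. ch (s * t)) + (\<Sum>t::'a\<in>UNIV. et t * ch (s * t))"
    by (simp add: distrib_right sum.distrib)
  also have "(\<Sum>t::'a\<in>UNIV. ch (s * t)) = 0" using orth1[of s] s by simp
  also have "(\<Sum>t::'a\<in>UNIV. et t * ch (s * t)) = (\<Sum>u::'a\<in>UNIV. et (u / s) * ch u)"
    by (rule sum.reindex_bij_witness[of _ "\<lambda>u. u / s" "\<lambda>t. s * t"]) (use s in auto)
  also have "\<dots> = (\<Sum>u::'a\<in>UNIV. et s * (et u * ch u))"
  proof (intro sum.cong refl)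
    fix u :: 'a
    have "et (u / s) = et u * et (inverse s)" by (simp add: divide_inverse et_mult[OF two])
    then show "et (u / s) * ch u = et s * (et u * ch u)" by (simp add: et_inverse)
  qed
  also have "\<dots> = et s * G" by (simp add: G_def sum_distrib_left)
  finally show ?thesis by simp
qed

lemma gauss_quad_lin:
  assumes s: "s \<noteq> 0"
  shows "(\<Sum>z::'a\<in>UNIV. ch (s * z^2 + b * z)) = ch (- (b^2 / (4 * s))) * (et s * G)"
proof -
  define c where "c = b / (2 * s)"
  have s2: "2 * s \<noteq> 0" using two s by simp
  have s4: "4 * s \<noteq> 0" using two s by (metis mult_eq_0_iff mult_2 numeral_Bit0 one_add_one)
  have sc: "2 * s * c = b" using s2 by (simp add: c_def)
  have e1: "s * (w - c)^2 + (2 * s * c) * (w - c) = s * w^2 - s * c^2" for w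
    by (simp add: algebra_simps power2_eq_square)
  have e2: "(2 * s * c)^2 / (4 * s) = s * c^2"
    using s4 by (simp add: power2_eq_square field_simps)
  have id: "s * (w - c)^2 + b * (w - c) = s * w^2 + (- (b^2 / (4 * s)))" for w
    using e1[of w] e2 unfolding sc by simp
  have "(\<Sum>z::'a\<in>UNIV. ch (s * z^2 + b * z)) = (\<Sum>w::'a\<in>UNIV. ch (s * (w - c)^2 + b * (w - c)))"
    by (rule sum.reindex_bij_witness[of _ "\<lambda>w. w - c" "\<lambda>z. z + c"]) auto
  also have "\<dots> = (\<Sum>w::'a\<in>UNIV. ch (s * w^2) * ch (- (b^2 / (4 * s))))"
    by (simp only: id ch_add)
  also have "\<dots> = ch (- (b^2 / (4 * s))) * (et s * G)"
    using gauss_quad[OF s] by (simp add: sum_distrib_right[symmetric] mult.commute)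
  finally show ?thesis .
qed

lemma gauss_sq: "G * G = et (-1::'a) * of_nat CARD('a)"
proof -
  have inner: "(\<Sum>b::'a\<in>UNIV. et a * et b * ch (a + b)) = (\<Sum>u::'a\<in>UNIV. et u * ch (a * (1 + u)))" for a
  proof (cases "a = 0")
    case True
    then show ?thesis using et_sum[OF two] by (simp add: sum_distrib_left[symmetric])
  next
    case False
    have "(\<Sum>b::'a\<in>UNIV. et a * et b * ch (a + b)) = (\<Sum>u::'a\<in>UNIV. et a * et (a * u) * ch (a + a * u))"
      by (rule sum.reindex_bij_witness[of _ "\<lambda>u. a * u" "\<lambda>b. b / a"]) (use False in auto)
    also have "\<dots> = (\<Sum>u::'a\<in>UNIV. et u * ch (a * (1 + u)))"
    proof (intro sum.cong refl)
      fix u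
      have "et a * et (a * u) = (et a * et a) * et u" by (simp add: et_mult[OF two])
      also have "\<dots> = et u" using et_sq_one[OF False] by simp
      finally show "et a * et (a * u) * ch (a + a * u) = et u * ch (a * (1 + u))"
        by (simp add: algebra_simps)
    qed
    finally show ?thesis .
  qed
  have "G * G = (\<Sum>a::'a\<in>UNIV. \<Sum>b::'a\<in>UNIV. et a * et b * ch (a + b))"
    by (simp add: G_def sum_product ch_add mult_ac)
  also have "\<dots> = (\<Sum>a::'a\<in>UNIV. \<Sum>u::'a\<in>UNIV. et u * ch (a * (1 + u)))"
    by (simp only: inner)
  also have "\<dots> = (\<Sum>u::'a\<in>UNIV. et u * (\<Sum>a::'a\<in>UNIV. ch ((1 + u) * a)))"
    by (subst sum.swap) (simp add: sum_distrib_left mult.commute)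
  also have "\<dots> = (\<Sum>u::'a\<in>UNIV. if u = -1 then et u * of_nat CARD('a) else 0)"
    by (intro sum.cong refl) (auto simp: orth1 add_eq_0_iff)
  also have "\<dots> = et (-1::'a) * of_nat CARD('a)" by simp
  finally show ?thesis .
qed

lemma gauss_inv:
  "(\<Sum>s::'a\<in>UNIV. et s * ch (c * inverse s)) = et c * G"
proof (cases "c = 0")
  case True
  then show ?thesis using et_sum[OF two] by simp
next
  case False
  have "(\<Sum>s::'a\<in>UNIV. et s * ch (c * inverse s)) = (\<Sum>u::'a\<in>UNIV. et (c * inverse u) * ch u)"
  proof (rule sum.reindex_bij_witness[of _ "\<lambda>s. c * inverse s" "\<lambda>u. c * inverse u"])
    have inv2: "c * inverse (c * inverse a) = a" for a using False
      by (cases "a = 0") (auto simp: field_simps)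
    show "c * inverse (c * inverse a) = a" for a by (rule inv2)
    show "c * inverse (c * inverse a) = a" for a by (rule inv2)
    show "et (c * inverse (c * inverse a)) * ch (c * inverse a) = et a * ch (c * inverse a)" for a
      by (simp only: inv2)
  qed auto
  also have "\<dots> = (\<Sum>u::'a\<in>UNIV. et c * (et u * ch u))"
    by (intro sum.cong refl) (use False in \<open>simp add: et_mult[OF two] et_inverse\<close>)
  also have "\<dots> = et c * G" by (simp add: G_def sum_distrib_left)
  finally show ?thesis .
qed

end



context addchar
begin

lemma kern:
  fixes m :: "'a^'n::finite"
  assumes s: "s \<noteq> 0"
  shows "(\<Sum>w::'a^'n\<in>UNIV. ch (s * fq_norm w - fq_dot m w))
       = (et s * G) ^ CARD('n) * ch ((- (fq_norm m / 4)) * inverse s)"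
proof -
  have "(\<Sum>w::'a^'n\<in>UNIV. ch (s * fq_norm w - fq_dot m w))
      = (\<Sum>w::'a^'n\<in>UNIV. \<Prod>i\<in>UNIV. ch (s * (w $ i)^2 + (- (m $ i)) * (w $ i)))"
  proof (intro sum.cong refl)
    fix w :: "'a^'n"
    have "s * fq_norm w - fq_dot m w = (\<Sum>i\<in>UNIV. s * (w $ i)^2 + (- (m $ i)) * (w $ i))"
      by (simp add: fq_norm_def fq_dot_def sum_distrib_left sum_subtractf mult.commute)
    then show "ch (s * fq_norm w - fq_dot m w) = (\<Prod>i\<in>UNIV. ch (s * (w $ i)^2 + (- (m $ i)) * (w $ i)))"
      by (simp add: ch_sum)
  qed
  also have "\<dots> = (\<Prod>i\<in>UNIV. \<Sum>t\<in>UNIV. ch (s * t^2 + (- (m $ i)) * t))"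
    by (rule sum_vec_prod)
  also have "\<dots> = (\<Prod>i\<in>(UNIV::'n set). ch (- ((- (m $ i))^2 / (4 * s))) * (et s * G))"
    by (intro prod.cong refl gauss_quad_lin s)
  also have "\<dots> = (et s * G) ^ CARD('n) * (\<Prod>i\<in>(UNIV::'n set). ch (- ((m $ i)^2 / 4) * inverse s))"
  proof -
    have e: "- ((- (m $ i))^2 / (4 * s)) = - ((m $ i)^2 / 4) * inverse s" for i
    proof -
      have "- ((m $ i)^2 / 4) * inverse s = - ((m $ i)^2 / 4 / s)" by (simp only: divide_inverse minus_mult_left)
      also have "\<dots> = - ((m $ i)^2 / (4 * s))" by (simp only: divide_divide_eq_left)
      finally show ?thesis by simp
    qed
    have "(\<Prod>i\<in>(UNIV::'n set). ch (- ((- (m $ i))^2 / (4 * s))) * (et s * G))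
        = (\<Prod>i\<in>(UNIV::'n set). ch (- ((m $ i)^2 / 4) * inverse s)) * (et s * G) ^ CARD('n)"
      by (simp only: e prod.distrib prod_constant power_mult_distrib)
    then show ?thesis by (simp only: mult.commute)
  qed
  also have "(\<Prod>i\<in>(UNIV::'n set). ch (- ((m $ i)^2 / 4) * inverse s)) = ch ((- (fq_norm m / 4)) * inverse s)"
  proof -
    have "(\<Sum>i\<in>(UNIV::'n set). - ((m $ i)^2 / 4) * inverse s) = (- (fq_norm m / 4)) * inverse s"
    proof -
      have "(\<Sum>i\<in>(UNIV::'n set). - ((m $ i)^2 / 4) * inverse s) = (\<Sum>i\<in>(UNIV::'n set). - ((m $ i)^2 / 4)) * inverse s"
        by (simp only: sum_distrib_right)
      also have "(\<Sum>i\<in>(UNIV::'n set). - ((m $ i)^2 / 4)) = - (\<Sum>i\<in>(UNIV::'n set). (m $ i)^2 / 4)"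
        by (simp only: sum_negf)
      also have "(\<Sum>i\<in>(UNIV::'n set). (m $ i)^2 / 4) = fq_norm m / 4"
        by (simp only: fq_norm_def sum_divide_distrib)
      finally show ?thesis .
    qed
    then show ?thesis by (simp add: ch_sum[symmetric])
  qed
  finally show ?thesis .
qed

lemma dot_diff3: "fq_dot m (y - x - w) = fq_dot m y - fq_dot m x - fq_dot (m::'a^'n::finite) w"
  by (simp add: fq_dot_def sum_subtractf[symmetric] algebra_simps)

lemma fourier_pair:
  fixes A :: "('a^'n::finite) set"
  shows "(\<Sum>m::'a^'n\<in>UNIV. (\<Sum>w::'a^'n\<in>UNIV. ch (s * fq_norm w - fq_dot m w))
            * ((\<Sum>x\<in>A. ch (- fq_dot m x)) * cnj (\<Sum>x\<in>A. ch (- fq_dot m x))))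
       = of_nat CARD('a) ^ CARD('n) * (\<Sum>x\<in>A. \<Sum>y\<in>A. ch (s * fq_norm (y - x)))"
proof -
  let ?T = "\<lambda>m w x y. ch (s * fq_norm w) * ch (fq_dot m (y - x - w))"
  have "(\<Sum>m::'a^'n\<in>UNIV. (\<Sum>w::'a^'n\<in>UNIV. ch (s * fq_norm w - fq_dot m w))
            * ((\<Sum>x\<in>A. ch (- fq_dot m x)) * cnj (\<Sum>x\<in>A. ch (- fq_dot m x))))
      = (\<Sum>m::'a^'n\<in>UNIV. \<Sum>w::'a^'n\<in>UNIV. \<Sum>x\<in>A. \<Sum>y\<in>A. ?T m w x y)"
  proof (intro sum.cong refl)
    fix m :: "'a^'n"
    have c: "cnj (\<Sum>x\<in>A. ch (- fq_dot m x)) = (\<Sum>y\<in>A. ch (fq_dot m y))"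
      by (simp add: ch_minus)
    have t: "ch (s * fq_norm w - fq_dot m w) * (ch (- fq_dot m x) * ch (fq_dot m y)) = ?T m w x y"
      for w x y
    proof -
      have "s * fq_norm w - fq_dot m w + (- fq_dot m x + fq_dot m y) = s * fq_norm w + fq_dot m (y - x - w)"
        by (simp only: dot_diff3) (simp add: algebra_simps)
      note eq = this
      have "ch (s * fq_norm w - fq_dot m w) * (ch (- fq_dot m x) * ch (fq_dot m y))
          = ch (s * fq_norm w - fq_dot m w + (- fq_dot m x + fq_dot m y))" by (simp only: ch_add)
      also have "\<dots> = ch (s * fq_norm w + fq_dot m (y - x - w))" by (simp only: eq)
      also have "\<dots> = ?T m w x y" by (simp only: ch_add)
      finally show ?thesis .
    qed
    show "(\<Sum>w::'a^'n\<in>UNIV. ch (s * fq_norm w - fq_dot m w))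
            * ((\<Sum>x\<in>A. ch (- fq_dot m x)) * cnj (\<Sum>x\<in>A. ch (- fq_dot m x)))
        = (\<Sum>w::'a^'n\<in>UNIV. \<Sum>x\<in>A. \<Sum>y\<in>A. ?T m w x y)"
      unfolding c sum_product sum_distrib_right t[symmetric] by (simp add: sum_distrib_left)
  qed
  also have "\<dots> = (\<Sum>w::'a^'n\<in>UNIV. \<Sum>m::'a^'n\<in>UNIV. \<Sum>x\<in>A. \<Sum>y\<in>A. ?T m w x y)"
    by (rule sum.swap)
  also have "\<dots> = (\<Sum>w::'a^'n\<in>UNIV. \<Sum>x\<in>A. \<Sum>m::'a^'n\<in>UNIV. \<Sum>y\<in>A. ?T m w x y)"
    by (rule sum.cong[OF refl], rule sum.swap)
  also have "\<dots> = (\<Sum>w::'a^'n\<in>UNIV. \<Sum>x\<in>A. \<Sum>y\<in>A. \<Sum>m::'a^'n\<in>UNIV. ?T m w x y)"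
    by (rule sum.cong[OF refl], rule sum.cong[OF refl], rule sum.swap)
  also have "\<dots> = (\<Sum>x\<in>A. \<Sum>w::'a^'n\<in>UNIV. \<Sum>y\<in>A. \<Sum>m::'a^'n\<in>UNIV. ?T m w x y)"
    by (rule sum.swap)
  also have "\<dots> = (\<Sum>x\<in>A. \<Sum>y\<in>A. \<Sum>w::'a^'n\<in>UNIV. \<Sum>m::'a^'n\<in>UNIV. ?T m w x y)"
    by (rule sum.cong[OF refl], rule sum.swap)
  also have "\<dots> = (\<Sum>x\<in>A. \<Sum>y\<in>A. \<Sum>w::'a^'n\<in>UNIV.
        ch (s * fq_norm w) * (if y - x - w = 0 then of_nat CARD('a) ^ CARD('n) else 0))"
    by (intro sum.cong refl) (simp add: sum_distrib_left[symmetric] orthd)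
  also have "\<dots> = (\<Sum>x\<in>A. \<Sum>y\<in>A. ch (s * fq_norm (y - x)) * of_nat CARD('a) ^ CARD('n))"
  proof (intro sum.cong refl)
    fix x y :: "'a^'n"
    have "(\<Sum>w::'a^'n\<in>UNIV. ch (s * fq_norm w) * (if y - x - w = 0 then of_nat CARD('a) ^ CARD('n) else 0))
        = (\<Sum>w::'a^'n\<in>UNIV. if w = y - x then ch (s * fq_norm w) * of_nat CARD('a) ^ CARD('n) else 0)"
      by (intro sum.cong refl) auto
    also have "\<dots> = ch (s * fq_norm (y - x)) * of_nat CARD('a) ^ CARD('n)" by simp
    finally show "(\<Sum>w::'a^'n\<in>UNIV. ch (s * fq_norm w) * (if y - x - w = 0 then of_nat CARD('a) ^ CARD('n) else 0))
        = ch (s * fq_norm (y - x)) * of_nat CARD('a) ^ CARD('n)" .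
  qed
  also have "\<dots> = of_nat CARD('a) ^ CARD('n) * (\<Sum>x\<in>A. \<Sum>y\<in>A. ch (s * fq_norm (y - x)))"
    by (simp add: sum_distrib_left mult.commute)
  finally show ?thesis .
qed

end



lemma zr_sum:
  fixes A :: "('a::{field,finite}^'n::finite) set"
  shows "(of_nat (ZR A) :: complex) = (\<Sum>x\<in>A. \<Sum>y\<in>A. if fq_norm (x - y) = 0 then 1 else 0)"
proof -
  have "ZR A = card {p \<in> A \<times> A. fq_norm (fst p - snd p) = 0}"
    unfolding ZR_def by (rule arg_cong[where f=card]) auto
  then have "(of_nat (ZR A) :: complex) = (\<Sum>p\<in>{p \<in> A \<times> A. fq_norm (fst p - snd p) = 0}. 1)"
    by simp
  also have "\<dots> = (\<Sum>p\<in>A \<times> A. if fq_norm (fst p - snd p) = 0 then 1 else 0)"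
    by (rule sum.inter_filter) simp
  also have "\<dots> = (\<Sum>x\<in>A. \<Sum>y\<in>A. if fq_norm (x - y) = 0 then 1 else 0)"
    by (simp add: sum.cartesian_product case_prod_beta)
  finally show ?thesis .
qed

lemma fq_norm_swap: "fq_norm (y - x) = fq_norm (x - (y::'a::{field,finite}^'n::finite))"
proof -
  have "(y - x) $ i ^ 2 = (x - y) $ i ^ 2" for i
    by (simp add: power2_eq_square algebra_simps)
  then show ?thesis by (simp add: fq_norm_def)
qed

definition cq :: "'a::{field,finite}^'n::finite \<Rightarrow> 'a" where
  "cq m = - (fq_norm m / 4)"

context addchar
begin

definition am :: "('a^'n::finite) set \<Rightarrow> 'a^'n \<Rightarrow> complex" where
  "am A m = (\<Sum>x\<in>A. ch (- fq_dot m x))"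

lemma orth1': "(\<Sum>t::'a\<in>UNIV. ch (t * a)) = (if a = 0 then of_nat CARD('a) else 0)"
  using orth1[of a] by (simp only: mult.commute)

lemma et_pow_odd: "odd k \<Longrightarrow> s \<noteq> 0 \<Longrightarrow> et s ^ k = et s"
proof -
  assume k: "odd k" and s: "s \<noteq> 0"
  then obtain j where j: "k = 2 * j + 1" using oddE by blast
  have "et s ^ k = et s * (et s * et s) ^ j" using j by (simp add: power_mult power2_eq_square)
  then show ?thesis using et_sq_one[OF s] by simp
qed

lemma T_nonzero:
  fixes A :: "('a^'n::finite) set"
  assumes s: "s \<noteq> 0" and d: "odd CARD('n)"
  shows "of_nat CARD('a) ^ CARD('n) * (\<Sum>x\<in>A. \<Sum>y\<in>A. ch (s * fq_norm (x - y)))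
       = G ^ CARD('n) * et s * (\<Sum>m::'a^'n\<in>UNIV. ch (cq m * inverse s) * (am A m * cnj (am A m)))"
proof -
  have "of_nat CARD('a) ^ CARD('n) * (\<Sum>x\<in>A. \<Sum>y\<in>A. ch (s * fq_norm (x - y)))
      = of_nat CARD('a) ^ CARD('n) * (\<Sum>x\<in>A. \<Sum>y\<in>A. ch (s * fq_norm (y - x)))"
    by (simp add: fq_norm_swap)
  also have "\<dots> = (\<Sum>m::'a^'n\<in>UNIV. (\<Sum>w::'a^'n\<in>UNIV. ch (s * fq_norm w - fq_dot m w))
            * ((\<Sum>x\<in>A. ch (- fq_dot m x)) * cnj (\<Sum>x\<in>A. ch (- fq_dot m x))))"
    by (rule fourier_pair[symmetric])
  also have "\<dots> = (\<Sum>m::'a^'n\<in>UNIV. (et s * G) ^ CARD('n) * ch (cq m * inverse s)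
            * (am A m * cnj (am A m)))"
    by (intro sum.cong refl) (simp only: kern[OF s] am_def cq_def)
  also have "\<dots> = G ^ CARD('n) * et s * (\<Sum>m::'a^'n\<in>UNIV. ch (cq m * inverse s) * (am A m * cnj (am A m)))"
    by (simp add: sum_distrib_left power_mult_distrib et_pow_odd[OF d s] mult_ac)
  finally show ?thesis .
qed

lemma et_cq: "et (cq m) = et (-1::'a) * et (fq_norm (m::'a^'n::finite))"
proof -
  let ?x = "fq_norm m"
  have "cq m = (-1::'a) * ?x * inverse 4" unfolding cq_def
    by (simp only: divide_inverse mult_minus_left mult_1_left)
  note eq = this
  have "et (cq m) = et ((-1::'a) * ?x * inverse (4::'a))" by (simp only: eq)
  also have "\<dots> = et (-1::'a) * et ?x * et (inverse (4::'a))"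
    by (simp only: et_mult[OF two])
  finally have "et (cq m) = et (-1::'a) * et ?x * et (inverse (4::'a))" .
  moreover have "et (inverse (4::'a)) = 1"
  proof -
    have "(4::'a) = 2 ^ 2" by (simp only: power2_eq_square) simp
    then have "et (4::'a) = 1" using et_square[OF two] by simp
    then show ?thesis by (simp only: et_inverse)
  qed
  ultimately show ?thesis by simp
qed

lemma main_complex:
  fixes A :: "('a^'n::finite) set"
  assumes d: "odd CARD('n)"
  shows "of_nat CARD('a) ^ CARD('n) * (of_nat CARD('a) * of_nat (ZR A) - of_nat (card A) ^ 2)
       = G ^ (CARD('n) + 1) * et (-1::'a) * (\<Sum>m::'a^'n\<in>UNIV. et (fq_norm m) * (am A m * cnj (am A m)))"
proof -
  let ?T = "\<lambda>s. (\<Sum>x\<in>A. \<Sum>y\<in>A. ch (s * fq_norm (x - y)))"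
  let ?Q = "of_nat CARD('a) ^ CARD('n) :: complex"
  let ?B = "\<lambda>m. am A m * cnj (am A m)"
  let ?X = "\<lambda>s m. ch (cq m * inverse s)"
  have "of_nat CARD('a) * of_nat (ZR A) = (\<Sum>x\<in>A. \<Sum>y\<in>A. of_nat CARD('a) * (if fq_norm (x - y) = 0 then 1 else 0 :: complex))"
    by (simp add: zr_sum sum_distrib_left)
  also have "\<dots> = (\<Sum>x\<in>A. \<Sum>y\<in>A. \<Sum>s::'a\<in>UNIV. ch (s * fq_norm (x - y)))"
    by (intro sum.cong refl) (simp add: orth1')
  also have "\<dots> = (\<Sum>x\<in>A. \<Sum>s::'a\<in>UNIV. \<Sum>y\<in>A. ch (s * fq_norm (x - y)))"
    by (rule sum.cong[OF refl], rule sum.swap)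
  also have "\<dots> = (\<Sum>s::'a\<in>UNIV. ?T s)"
    by (rule sum.swap)
  also have "\<dots> = ?T 0 + (\<Sum>s\<in>UNIV - {0}. ?T s)"
    by (rule sum.remove) auto
  also have "?T 0 = of_nat (card A) ^ 2" by (simp add: power2_eq_square)
  finally have zr: "of_nat CARD('a) * of_nat (ZR A) - of_nat (card A) ^ 2 = (\<Sum>s\<in>UNIV - {0}. ?T s)"
    by simp
  have "?Q * (\<Sum>s\<in>UNIV - {0}. ?T s) = (\<Sum>s\<in>UNIV - {0}. ?Q * ?T s)"
    by (rule sum_distrib_left)
  also have "\<dots> = (\<Sum>s\<in>UNIV - {0}. G ^ CARD('n) * et s * (\<Sum>m::'a^'n\<in>UNIV. ?X s m * ?B m))"
    by (intro sum.cong refl) (rule T_nonzero[OF _ d], simp)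
  also have "\<dots> = (\<Sum>s\<in>UNIV. G ^ CARD('n) * et s * (\<Sum>m::'a^'n\<in>UNIV. ?X s m * ?B m))"
  proof -
    have gen: "(\<Sum>s\<in>UNIV. F s) = F 0 + (\<Sum>s\<in>UNIV - {0}. F s)" for F :: "'a \<Rightarrow> complex"
      by (rule sum.remove) auto
    show ?thesis
      using gen[of "\<lambda>s. G ^ CARD('n) * et s * (\<Sum>m::'a^'n\<in>UNIV. ?X s m * ?B m)"] by simp
  qed
  also have "\<dots> = (\<Sum>s\<in>UNIV. G ^ CARD('n) * (\<Sum>m::'a^'n\<in>UNIV. ?B m * (et s * ?X s m)))"
    by (intro sum.cong refl) (simp add: sum_distrib_left mult_ac)
  also have "\<dots> = G ^ CARD('n) * (\<Sum>s\<in>UNIV. \<Sum>m::'a^'n\<in>UNIV. ?B m * (et s * ?X s m))"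
    by (rule sum_distrib_left[symmetric])
  also have "(\<Sum>s\<in>UNIV. \<Sum>m::'a^'n\<in>UNIV. ?B m * (et s * ?X s m))
      = (\<Sum>m::'a^'n\<in>UNIV. \<Sum>s\<in>UNIV. ?B m * (et s * ?X s m))"
    by (rule sum.swap)
  also have "\<dots> = (\<Sum>m::'a^'n\<in>UNIV. ?B m * (\<Sum>s\<in>UNIV. et s * ?X s m))"
    by (intro sum.cong refl) (rule sum_distrib_left[symmetric])
  also have "\<dots> = (\<Sum>m::'a^'n\<in>UNIV. ?B m * (et (cq m) * G))"
    by (intro sum.cong refl) (simp only: gauss_inv)
  also have "\<dots> = (\<Sum>m::'a^'n\<in>UNIV. (G * et (-1::'a)) * (et (fq_norm m) * ?B m))"
    by (intro sum.cong refl) (simp only: et_cq mult_ac)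
  also have "G ^ CARD('n) * \<dots> = G ^ CARD('n) * ((G * et (-1::'a)) * (\<Sum>m::'a^'n\<in>UNIV. et (fq_norm m) * ?B m))"
    by (rule arg_cong[where f="\<lambda>z. G ^ CARD('n) * z"], rule sum_distrib_left[symmetric])
  also have "\<dots> = G ^ (CARD('n) + 1) * et (-1::'a) * (\<Sum>m::'a^'n\<in>UNIV. et (fq_norm m) * ?B m)"
    by (simp only: power_add power_one_right mult_ac)
  finally show ?thesis using zr by simp
qed

end



lemma omega_diff:
  fixes A :: "('a::{field,finite}^'n::finite) set"
  shows "(\<Sum>m\<in>UNIV. real_of_int (qchar (fq_norm m)) * (cmod (fourier_set A m))^2) = Omega_plus A - Omega_minus A"
proof -
  let ?c = "\<lambda>m. (cmod (fourier_set A m))^2"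
  have pt: "real_of_int (qchar (fq_norm m)) * ?c m
      = (if qchar (fq_norm m) = 1 then ?c m else 0) - (if qchar (fq_norm m) = -1 then ?c m else 0)" for m
    using qchar_range[of "fq_norm m"] by auto
  have "(\<Sum>m\<in>UNIV. real_of_int (qchar (fq_norm m)) * ?c m)
      = (\<Sum>m\<in>UNIV. if qchar (fq_norm m) = 1 then ?c m else 0) - (\<Sum>m\<in>UNIV. if qchar (fq_norm m) = -1 then ?c m else 0)"
    by (simp only: pt sum_subtractf)
  also have "(\<Sum>m\<in>UNIV. if qchar (fq_norm m) = 1 then ?c m else 0) = Omega_plus A"
    unfolding Omega_plus_def by (rule sum.inter_filter[symmetric, where A=UNIV, simplified]) simp
  also have "(\<Sum>m\<in>UNIV. if qchar (fq_norm m) = -1 then ?c m else 0) = Omega_minus A"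
    unfolding Omega_minus_def by (rule sum.inter_filter[symmetric, where A=UNIV, simplified]) simp
  finally show ?thesis .
qed

lemma main_real:
  fixes A :: "('a::{field,finite}^'n::finite) set"
  assumes q: "odd CARD('a)" and d: "odd CARD('n)"
  shows "real CARD('a) ^ CARD('n) * (real CARD('a) * real (ZR A) - real (card A) ^ 2)
       = (real_of_int (qchar (-1::'a)) * real CARD('a)) ^ ((CARD('n) + 1) div 2)
         * real_of_int (qchar (-1::'a)) * ((real CARD('a) ^ CARD('n))^2 * (Omega_plus A - Omega_minus A))"
proof -
  interpret addchar "canon_chi :: 'a \<Rightarrow> complex"
    by unfold_locales (auto simp: canon_chi_add canon_chi_nontriv canon_chi_norm two_nz[OF q])
  let ?Q = "real CARD('a) ^ CARD('n)"
  let ?e = "real_of_int (qchar (-1::'a))"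
  let ?k = "(CARD('n) + 1) div 2"
  have etr: "et x = complex_of_real (real_of_int (qchar x))" for x :: 'a by (simp add: et_def)
  have B: "am A m * cnj (am A m) = complex_of_real (?Q^2 * (cmod (fourier_set A m))^2)" for m :: "'a^'n"
  proof -
    have "am A m = of_nat CARD('a) ^ CARD('n) * fourier_set A m"
      by (simp add: am_def fourier_set_def)
    then have "cmod (am A m) = ?Q * cmod (fourier_set A m)"
      by (simp add: norm_mult norm_power)
    then show ?thesis using complex_norm_square[of "am A m"] by (simp add: power_mult_distrib)
  qed
  have Gp: "G ^ (CARD('n) + 1) = complex_of_real ((?e * real CARD('a)) ^ ?k)"
  proof -
    have "CARD('n) + 1 = 2 * ?k" using d by simp
    then have "G ^ (CARD('n) + 1) = G ^ (2 * ?k)" by (rule arg_cong)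
    also have "\<dots> = (G * G) ^ ?k" by (simp only: power_mult power2_eq_square)
    finally have "G ^ (CARD('n) + 1) = (G * G) ^ ?k" .
    also have "\<dots> = complex_of_real ((?e * real CARD('a)) ^ ?k)" by (simp add: gauss_sq etr)
    finally show ?thesis .
  qed
  have "complex_of_real (?Q * (real CARD('a) * real (ZR A) - real (card A) ^ 2))
      = of_nat CARD('a) ^ CARD('n) * (of_nat CARD('a) * of_nat (ZR A) - of_nat (card A) ^ 2)"
    by simp
  also have "\<dots> = G ^ (CARD('n) + 1) * et (-1::'a) * (\<Sum>m::'a^'n\<in>UNIV. et (fq_norm m) * (am A m * cnj (am A m)))"
    by (rule main_complex[OF d])
  also have "\<dots> = complex_of_real ((?e * real CARD('a)) ^ ?k * ?e
       * (\<Sum>m::'a^'n\<in>UNIV. real_of_int (qchar (fq_norm m)) * (?Q^2 * (cmod (fourier_set A m))^2)))"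
    by (simp only: Gp etr B of_real_mult of_real_sum)
  also have "(\<Sum>m::'a^'n\<in>UNIV. real_of_int (qchar (fq_norm m)) * (?Q^2 * (cmod (fourier_set A m))^2))
      = ?Q^2 * (\<Sum>m::'a^'n\<in>UNIV. real_of_int (qchar (fq_norm m)) * (cmod (fourier_set A m))^2)"
    by (simp add: sum_distrib_left mult_ac)
  also have "(\<Sum>m::'a^'n\<in>UNIV. real_of_int (qchar (fq_norm m)) * (cmod (fourier_set A m))^2)
      = Omega_plus A - Omega_minus A" by (rule omega_diff)
  finally show ?thesis by (simp only: of_real_eq_iff)
qed



lemma h1: "(-1) * (b / 2) * (P - M) = - (b / 2 * P) + b / 2 * (M::real)" by (simp add: field_simps)
lemma h2: "1 * (b / 2) * (P - M) = b / 2 * P - b / 2 * (M::real)" by (simp add: field_simps)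

theorem proposition3p4:
  fixes A :: "('a::{field,finite} ^ 'n) set"
  assumes "odd CARD('a)"
    and "odd CARD('n)"
  shows "(CARD('n) mod 4 = 3 \<and> CARD('a) mod 4 = 3 \<longrightarrow>
           real (ZR A) / 2 = real (card A) ^ 2 / (2 * real CARD('a))
             - real CARD('a) ^ ((3 * CARD('n) - 1) div 2) / 2 * Omega_plus A
             + real CARD('a) ^ ((3 * CARD('n) - 1) div 2) / 2 * Omega_minus A)
       \<and> (CARD('n) mod 4 = 1 \<or> (CARD('n) mod 4 = 3 \<and> CARD('a) mod 4 = 1) \<longrightarrow>
           real (ZR A) / 2 = real (card A) ^ 2 / (2 * real CARD('a))
             + real CARD('a) ^ ((3 * CARD('n) - 1) div 2) / 2 * Omega_plus A
             - real CARD('a) ^ ((3 * CARD('n) - 1) div 2) / 2 * Omega_minus A)"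
proof -
  note q = assms(1) and d = assms(2)
  let ?q = "real CARD('a)" and ?d = "CARD('n)"
  let ?Q = "?q ^ ?d"
  let ?e = "real_of_int (qchar (-1::'a))"
  let ?k = "(?d + 1) div 2"
  let ?E = "(3 * ?d - 1) div 2"
  let ?W = "Omega_plus A - Omega_minus A"
  let ?Z = "real (ZR A)" and ?n = "real (card A)"
  have q0: "?q > 0" by simp
  have Q0: "?Q > 0" by simp
  have kE: "?k + ?d = ?E + 1" using d by (elim oddE) simp
  have mr: "?Q * (?q * ?Z - ?n ^ 2) = (?e * ?q) ^ ?k * ?e * (?Q ^ 2 * ?W)"
    by (rule main_real[OF q d])
  have "(?e * ?q) ^ ?k * ?e * (?Q ^ 2 * ?W) = ?Q * (?e ^ (?k + 1) * (?q ^ ?k * ?Q) * ?W)"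
    by (simp add: power_mult_distrib power2_eq_square mult_ac)
  also have "?q ^ ?k * ?Q = ?q * ?q ^ ?E"
    by (simp only: power_add[symmetric] kE) simp
  finally have "?Q * (?q * ?Z - ?n ^ 2) = ?Q * (?e ^ (?k + 1) * (?q * ?q ^ ?E) * ?W)"
    using mr by simp
  then have key: "?q * ?Z - ?n ^ 2 = ?e ^ (?k + 1) * (?q * ?q ^ ?E) * ?W"
    using Q0 by simp
  then have fin: "?Z / 2 = ?n ^ 2 / (2 * ?q) + ?e ^ (?k + 1) * (?q ^ ?E / 2) * ?W"
    using q0 by (simp add: field_simps)
  have em: "qchar (-1::'a) = (if CARD('a) mod 4 = 1 then 1 else -1)"
    by (rule qchar_minus_one[OF q])
  have esq: "?e * ?e = 1" using em by (simp split: if_splits)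
  have epow_even: "?e ^ (2 * j) = 1" for j
    by (simp add: power_mult power2_eq_square esq)
  show ?thesis
  proof (intro conjI impI)
    assume h: "?d mod 4 = 3 \<and> CARD('a) mod 4 = 3"
    define j where "j = ?d div 4"
    have dj: "?d = 4 * j + 3" unfolding j_def using h by presburger
    have j: "?k + 1 = 2 * (j + 1) + 1" using dj by presburger
    have "?e = -1" using em h by simp
    then have "?e ^ (?k + 1) = -1" using j epow_even[of "j+1"] by (simp only: power_add power_one_right)
    note ev = this
    have f2: "?Z / 2 = ?n ^ 2 / (2 * ?q) + (-1) * (?q ^ ?E / 2) * ?W" using fin by (simp only: ev)
    have "(-1) * (?q ^ ?E / 2) * ?W = - (?q ^ ?E / 2 * Omega_plus A) + ?q ^ ?E / 2 * Omega_minus A"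
      by (rule h1)
    then show "?Z / 2 = ?n ^ 2 / (2 * ?q) - ?q ^ ?E / 2 * Omega_plus A + ?q ^ ?E / 2 * Omega_minus A"
      using f2 by linarith
  next
    assume h: "?d mod 4 = 1 \<or> (?d mod 4 = 3 \<and> CARD('a) mod 4 = 1)"
    have "?e ^ (?k + 1) = 1"
    proof (cases "?d mod 4 = 1")
      case True
      define j where "j = ?d div 4"
      have dj: "?d = 4 * j + 1" unfolding j_def using True by presburger
      have "?k + 1 = 2 * (j + 1)" using dj by presburger
      then show ?thesis using epow_even[of "j + 1"] by (simp only:)
    next
      case False
      then have "CARD('a) mod 4 = 1" using h by simp
      then have "?e = 1" using em by simp
      then show ?thesis by simp
    qed
    note ev = this
    have f2: "?Z / 2 = ?n ^ 2 / (2 * ?q) + 1 * (?q ^ ?E / 2) * ?W" using fin by (simp only: ev)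
    have "1 * (?q ^ ?E / 2) * ?W = ?q ^ ?E / 2 * Omega_plus A - ?q ^ ?E / 2 * Omega_minus A"
      by (rule h2)
    then show "?Z / 2 = ?n ^ 2 / (2 * ?q) + ?q ^ ?E / 2 * Omega_plus A - ?q ^ ?E / 2 * Omega_minus A"
      using f2 by linarith
  qed
qed


end
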